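(* Let $n\ge 1$ and let $\mathbb{P}$ be a triangle-free graph on the vertex set $[n]$. Then: (i) $\mathrm{ex}_{\mathbb{P}}(n,K_3)\le \dfrac{n\,\alpha(\mathbb{P})}{2}$. (ii) If $e(\mathbb{P})+\mathrm{N}(S_2,\mathbb{P})<\lfloor n^2/4\rfloor$, then \[ \mathrm{ex}_{\mathbb{P}}(n,K_3)\ \ge\ \Big(\lfloor n^2/4\rfloor - e(\mathbb{P})-\mathrm{N}(S_2,\mathbb{P})\Big)\cdot \psi\big(\gamma(\mathbb{P})\, d(\mathbb{P})\big). \]
   Context: Graphs are identified with their edge sets; $e(G)$ is the number of edges. For a triangle-free graph $\mathbb{P}$ on $[n]$, $\mathrm{ex}_{\mathbb{P}}(n,K_3)$ denotes the maximum of $e(G)$ over all triangle-free graphs $G$ on $[n]$ with $\mathbb{P}\subseteq G$. $\alpha(\mathbb{P})$ is the independence number, $d(\mathbb{P})=2e(\mathbb{P})/n$ is the average degree, and $\mathrm{N}(S_2,\mathbb{P})=\sum_{v}\binom{d_{\mathbb{P}}(v)}{2}$ is the number of copies of the two-edge path (star with two edges) in $\mathbb{P}$. When $e(\mathbb{P})+\mathrm{N}(S_2,\mathbb{P})<\lfloor n^2/4\rfloor$, define $\gamma(\mathbb{P})=\dfrac{n(n-2)}{\lfloor n^2/4\rfloor-e(\mathbb{P})-\mathrm{N}(S_2,\mathbb{P})}$. The function $\psi:[0,\infty)\to(0,1]$ is defined by $\psi(d)=\dfrac{d\ln d-d+1}{(d-1)^2}$ for $d\notin\{0,1\}$, $\psi(0)=1$,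 $\psi(1)=1/2$ (it is continuous and decreasing). *)

theory Defs
  imports "HOL-Analysis.Analysis"
begin

text \<open>Graphs on the vertex set [n] = {1..n} are identified with their edge sets;
an edge is a 2-element set of vertices.\<close>

definition graph_on :: "nat \<Rightarrow> nat set set \<Rightarrow> bool" where
  "graph_on n G \<longleftrightarrow> (\<forall>e\<in>G. \<exists>u v. e = {u, v} \<and> u \<noteq> v \<and> u \<in> {1..n} \<and> v \<in> {1..n})"

definition triangle_free :: "nat set set \<Rightarrow> bool" where
  "triangle_free G \<longleftrightarrow> \<not> (\<exists>a b c. {a, b} \<in> G \<and> {b, c} \<in> G \<and> {a, c} \<in> G)"

definition num_edges :: "nat set set \<Rightarrow> nat" where
  "num_edges G = card G"

definition ex_P_K3 :: "nat \<Rightarrow> nat set set \<Rightarrow> nat" where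
  "ex_P_K3 n P = Max {num_edges G | G. graph_on n G \<and> triangle_free G \<and> P \<subseteq> G}"

definition independent_set :: "nat \<Rightarrow> nat set set \<Rightarrow> nat set \<Rightarrow> bool" where
  "independent_set n G S \<longleftrightarrow> S \<subseteq> {1..n} \<and> (\<forall>u\<in>S. \<forall>v\<in>S. {u, v} \<notin> G)"

definition indep_num :: "nat \<Rightarrow> nat set set \<Rightarrow> nat" where
  "indep_num n G = Max {card S | S. independent_set n G S}"

definition degree :: "nat set set \<Rightarrow> nat \<Rightarrow> nat" where
  "degree G v = card {u. {u, v} \<in> G}"

definition avg_degree :: "nat \<Rightarrow> nat set set \<Rightarrow> real" where
  "avg_degree n G = 2 * real (num_edges G) / real n"

definition num_S2 :: "nat \<Rightarrow> nat set set \<Rightarrow> nat" where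
  "num_S2 n G = (\<Sum>v\<in>{1..n}. degree G v choose 2)"

definition gamma_P :: "nat \<Rightarrow> nat set set \<Rightarrow> real" where
  "gamma_P n G = real n * (real n - 2) /
     (real ((n^2) div 4) - real (num_edges G) - real (num_S2 n G))"

definition psi :: "real \<Rightarrow> real" where
  "psi d = (if d = 0 then 1 else if d = 1 then 1/2
            else (d * ln d - d + 1) / (d - 1)^2)"

end

theory Submission
  imports Defs
begin


definition Kf :: "real \<Rightarrow> real \<Rightarrow> real" where "Kf x t = (1 - t) / (1 - t + t * x)"
definition Kg :: "real \<Rightarrow> real \<Rightarrow> real" where "Kg x t = t * (1 - t) / (1 - t + t * x)^2"
definition gg :: "real \<Rightarrow> real" where "gg x = - integral {0..1} (Kg x)"

lemma den_pos: "x > 0 \<Longrightarrow> t \<in> {0..1} \<Longrightarrow> 1 - t + t * x > (0::real)"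
proof -
  assume x: "x > 0" and t: "t \<in> {0..1}"
  show ?thesis
  proof (cases "t = 0")
    case True then show ?thesis by simp
  next
    case False then have "t * x > 0" using t x by auto
    then show ?thesis using t by auto
  qed
qed

lemma aux_frac:
  fixes c d t :: real
  assumes "c \<noteq> 0" "d \<noteq> 0" "d = 1 + c*t"
  shows "-1/c + (c+1)/(c*d) = (1-t)/d"
proof -
  have "-1/c + (c+1)/(c*d) = (c + 1 - d)/(c*d)" using assms(1,2) by (simp add: field_simps)
  also have "\<dots> = (c*(1-t))/(c*d)" using assms(3) by (simp add: algebra_simps)
  also have "\<dots> = (1-t)/d" using assms(1) by simp
  finally show ?thesis .
qed

lemma psi_int: assumes "x \<ge> 0" shows "(Kf x has_integral psi x) {0..1}"
proof -
  consider "x = 0" | "x = 1" | "x > 0" "x \<noteq> 1" using assms by linarith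
  then show ?thesis
  proof cases
    case 1
    have c1: "((\<lambda>t::real. 1::real) has_integral 1) {0..1}"
      using has_integral_const_real[of "1::real" "0::real" 1] by simp
    have "(Kf x has_integral 1) {0..1}"
      by (rule has_integral_spike_finite[where S="{1}", OF _ _ c1]) (auto simp: Kf_def 1)
    then show ?thesis using 1 by (simp add: psi_def)
  next
    case 2
    have "((\<lambda>t. 1 - t) has_integral ((\<lambda>t. t - t^2/2) 1 - (\<lambda>t. t - t^2/2) 0)) {0..(1::real)}"
      apply (rule fundamental_theorem_of_calculus)
       apply simp
      apply (rule has_real_derivative_iff_has_vector_derivative[THEN iffD1])
      apply (auto intro!: derivative_eq_intros)
      done
    moreover have "Kf x = (\<lambda>t. 1 - t)" by (auto simp: Kf_def 2 fun_eq_iff)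
    ultimately have "(Kf x has_integral 1/2) {0..1}"
      by simp
    then show ?thesis using 2 by (simp add: psi_def)
  next
    case 3
    define c where "c = x - 1"
    have c0: "c \<noteq> 0" using 3 by (simp add: c_def)
    define k where "k = (c + 1) / c^2"
    define F where "F t = - t / c + k * ln (1 + c * t)" for t
    have "(Kf x has_integral (F 1 - F 0)) {0..1}"
    proof (rule fundamental_theorem_of_calculus)
      fix t :: real assume t: "t \<in> {0..1}"
      have pos: "1 + c * t > 0" using den_pos[OF 3(1) t] by (simp add: c_def algebra_simps)
      have "(F has_real_derivative (- 1 / c + k * (c / (1 + c * t)))) (at t within {0..1})"
        unfolding F_def
        by (auto intro!: derivative_eq_intros simp: pos c0)
      moreover have "- 1 / c + k * (c / (1 + c * t)) = Kf x t"
      proof -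
        have den: "1 - t + t*x = 1 + c*t" by (simp add: c_def algebra_simps)
        have "- 1 / c + k * (c / (1 + c * t)) = (1-t)/(1+c*t)"
        proof -
          have nz: "c + c*(c*t) \<noteq> 0" 
          proof -
            have "c*(1+c*t) \<noteq> 0" using c0 pos by simp
            moreover have "c + c*(c*t) = c*(1+c*t)" by (simp add: algebra_simps)
            ultimately show ?thesis by simp
          qed
          have "k * (c / (1 + c * t)) = (c+1)/(c*(1+c*t))"
          proof -
            have "c*c*(1+c*t) \<noteq> 0" using c0 pos by simp
            moreover have "c * c + c * (c * (c * t)) = c*c*(1+c*t)" by (simp add: algebra_simps)
            ultimately have nz2: "c * c + c * (c * (c * t)) \<noteq> 0" by simp
            show ?thesis using c0 pos nz nz2 by (simp add: k_def power2_eq_square field_simps)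
          qed
          moreover have "-1/c + (c+1)/(c*(1+c*t)) = (1-t)/(1+c*t)"
            using c0 pos by (intro aux_frac) auto
          ultimately show ?thesis by simp
        qed
        then show ?thesis by (simp add: Kf_def den)
      qed
      ultimately show "(F has_vector_derivative Kf x t) (at t within {0..1})"
        by (simp add: has_real_derivative_iff_has_vector_derivative)
    qed simp
    moreover have "F 1 - F 0 = psi x"
    proof -
      have xc: "x = 1 + c" by (simp add: c_def)
      have e1: "F 1 - F 0 = -1/c + ((c+1)/c^2) * ln x" by (simp add: F_def k_def xc)
      have m1: "-1/c = (- c)/c^2" using c0 by (simp add: power2_eq_square)
      have e2: "-1/c + ((c+1)/c^2) * ln x = ((c+1)*ln x - c)/c^2"
        unfolding m1 by (simp add: diff_divide_distrib add_divide_distrib[symmetric] times_divide_eq_left)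
      have e3: "psi x = ((c+1)*ln x - c)/c^2"
        using 3 by (simp add: psi_def xc algebra_simps)
      show ?thesis using e1 e2 e3 by simp
    qed
    ultimately show ?thesis by simp
  qed
qed

lemma Kg_int: assumes "x > 0" shows "(Kg x has_integral integral {0..1} (Kg x)) {0..1}"
proof -
  have nz: "\<And>t. t \<in> {0..1} \<Longrightarrow> 1 - t + t*x \<noteq> 0" using den_pos[OF assms] by (metis less_irrefl)
  have "continuous_on {0..1} (Kg x)"
    unfolding Kg_def using nz
    by (auto intro!: continuous_intros)
  then show ?thesis by (intro integrable_integral integrable_continuous_real)
qed

lemma gg_nonpos: assumes "x > 0" shows "gg x \<le> 0"
proof -
  have "0 \<le> integral {0..1} (Kg x)"
    by (rule has_integral_nonneg[OF Kg_int[OF assms]]) (auto simp: Kg_def)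
  then show ?thesis by (simp add: gg_def)
qed

lemma psi_nonneg: assumes "x \<ge> 0" shows "psi x \<ge> 0"
  by (rule has_integral_nonneg[OF psi_int[OF assms]]) (use assms in \<open>auto simp: Kf_def\<close>)

lemma aux_tan:
  fixes ax ay u :: real
  assumes "ax > 0" "ay > 0" "u \<ge> 0"
  shows "u/ay - u/ax + (ay-ax)*u/ax^2 \<ge> 0"
proof -
  have "u/ay - u/ax + (ay-ax)*u/ax^2 = u*(ax-ay)^2/(ax^2*ay)"
    using assms by (simp add: field_simps power2_eq_square)
  moreover have "u*(ax-ay)^2/(ax^2*ay) \<ge> 0" using assms by simp
  ultimately show ?thesis by simp
qed

lemma psi_tangent:
  assumes x: "x > 0" and y: "y \<ge> 0"
  shows "psi x + (y - x) * gg x \<le> psi y"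
proof -
  define I where "I = integral {0..1} (Kg x)"
  have hI: "(Kg x has_integral I) {0..1}" using Kg_int[OF x] by (simp add: I_def)
  have h: "((\<lambda>t. Kf y t - Kf x t + (y - x) * Kg x t) has_integral (psi y - psi x + (y - x) * I)) {0..1}"
    by (intro has_integral_add has_integral_diff has_integral_mult_right psi_int hI) (use x y in auto)
  have "0 \<le> psi y - psi x + (y - x) * I"
  proof (rule has_integral_nonneg[OF h])
    fix t :: real assume t: "t \<in> {0..1}"
    show "0 \<le> Kf y t - Kf x t + (y - x) * Kg x t"
    proof (cases "t = 1")
      case True then show ?thesis by (simp add: Kf_def Kg_def)
    next
      case False
      then have t1: "t < 1" using t by auto
      have ay: "1 - t + t * y > 0" using t1 t y by (simp add: add_pos_nonneg)
      have ax: "1 - t + t * x > 0" using den_pos[OF x t] .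
      have eq: "(y - x) * Kg x t = ((1 - t + t * y) - (1 - t + t * x)) * (1 - t) / (1 - t + t * x)^2"
        by (simp add: Kg_def algebra_simps)
      show ?thesis unfolding eq Kf_def
        using aux_tan[OF ax ay, of "1 - t"] t1 by simp
    qed
  qed
  then show ?thesis by (simp add: gg_def I_def algebra_simps)
qed

lemma psi_antimono:
  assumes "0 \<le> y" "y \<le> x" shows "psi x \<le> psi y"
proof (cases "x = 0")
  case True then show ?thesis using assms by simp
next
  case False
  then have x: "x > 0" using assms by simp
  have "(y - x) * gg x \<ge> 0" using gg_nonpos[OF x] assms by (simp add: mult_nonpos_nonpos)
  then show ?thesis using psi_tangent[OF x assms(1)] by simp
qed

lemma aux_ode:
  fixes a x t :: real
  assumes "a \<noteq> 0" "a = 1 - t + t * x"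
  shows "(x+1)*((1-t)/a) - 1 + (x - x^2)*(t*(1-t)/a^2) = x*((1-2*t)*a - t*(1-t)*(x-1))/a^2"
proof -
  have e1: "(x+1)*((1-t)/a) = ((x+1)*(1-t)*a)/a^2" using assms(1) by (simp add: power2_eq_square)
  have e2: "(1::real) = (a*a)/a^2" using assms(1) by (simp add: power2_eq_square)
  have e3: "(x - x^2)*(t*(1-t)/a^2) = ((x - x^2)*(t*(1-t)))/a^2" by simp
  have "(x+1)*((1-t)/a) - 1 + (x - x^2)*(t*(1-t)/a^2) = ((x+1)*(1-t)*a)/a^2 - (a*a)/a^2 + ((x - x^2)*(t*(1-t)))/a^2"
    using e1 e2 e3 by linarith
  also have "\<dots> = ((x+1)*(1-t)*a - a*a + (x - x^2)*(t*(1-t)))/a^2"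
    by (simp add: diff_divide_distrib add_divide_distrib)
  also have "(x+1)*(1-t)*a - a*a + (x - x^2)*(t*(1-t)) = x*((1-2*t)*a - t*(1-t)*(x-1))"
    unfolding assms(2) by (simp add: algebra_simps power2_eq_square)
  finally show ?thesis .
qed

lemma psi_ode:
  assumes x: "x > 0"
  shows "(x + 1) * psi x = 1 + (x - x^2) * gg x"
proof -
  define I where "I = integral {0..1} (Kg x)"
  have hI: "(Kg x has_integral I) {0..1}" using Kg_int[OF x] by (simp add: I_def)
  have c1: "((\<lambda>t::real. 1::real) has_integral 1) {0..1}"
    using has_integral_const_real[of "1::real" "0::real" 1] by simp
  have h1: "((\<lambda>t. (x+1) * Kf x t - 1 + (x - x^2) * Kg x t) has_integral ((x+1) * psi x - 1 + (x - x^2) * I)) {0..1}"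
    by (intro has_integral_add has_integral_diff has_integral_mult_right psi_int hI c1) (use x in auto)
  define H where "H t = x * t * (1 - t) / (1 - t + t * x)" for t
  have h2: "((\<lambda>t. (x+1) * Kf x t - 1 + (x - x^2) * Kg x t) has_integral (H 1 - H 0)) {0..1}"
  proof (rule fundamental_theorem_of_calculus)
    fix t :: real assume t: "t \<in> {0..1}"
    have pos: "1 - t + t * x > 0" using den_pos[OF x t] .
    have d1: "((\<lambda>t. x*t*(1-t)) has_real_derivative x*(1-2*t)) (at t)"
      by (auto intro!: derivative_eq_intros simp: algebra_simps)
    have d2: "((\<lambda>t. 1 - t + t * x) has_real_derivative (x - 1)) (at t)"
      by (auto intro!: derivative_eq_intros simp: algebra_simps)
    define a where "a = 1 - t + t * x"
    have nz: "1 - t + t * x \<noteq> 0" using pos by simp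
    have Hf: "H = (\<lambda>y. x*y*(1-y) / (1 - y + y * x))" by (simp add: H_def fun_eq_iff)
    have q: "(H has_real_derivative (x*(1-2*t) * a - (x - 1) * (x*t*(1-t))) / (a ^ Suc (Suc 0))) (at t)"
      unfolding Hf a_def by (rule DERIV_quotient[OF d1 d2 nz])
    have n1: "x*(1-2*t) * a - (x - 1) * (x*t*(1-t)) = x*((1-2*t)*a - t*(1-t)*(x-1))" by (simp add: algebra_simps)
    have n2: "a ^ Suc (Suc 0) = a^2" by (simp add: power2_eq_square)
    have n3: "x*((1-2*t)*a - t*(1-t)*(x-1))/a^2 = (x+1)*((1-t)/a) - 1 + (x - x^2)*(t*(1-t)/a^2)"
      using aux_ode[of a t x] pos a_def by simp
    have n4: "(x+1)*((1-t)/a) - 1 + (x - x^2)*(t*(1-t)/a^2) = (x+1) * Kf x t - 1 + (x - x^2) * Kg x t"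
      by (simp add: Kf_def Kg_def a_def)
    have "(H has_real_derivative ((x+1) * Kf x t - 1 + (x - x^2) * Kg x t)) (at t)"
      using q unfolding n1 n2 n3 n4 .
    then have "(H has_real_derivative ((x+1) * Kf x t - 1 + (x - x^2) * Kg x t)) (at t within {0..1})"
      by (rule has_field_derivative_at_within)
    then show "(H has_vector_derivative ((x+1) * Kf x t - 1 + (x - x^2) * Kg x t)) (at t within {0..1})"
      by (simp add: has_real_derivative_iff_has_vector_derivative)
  qed simp
  have "H 1 - H 0 = 0" by (simp add: H_def)
  then have "(x+1) * psi x - 1 + (x - x^2) * I = 0" using has_integral_unique[OF h1 h2] by simp
  then show ?thesis by (simp add: gg_def I_def algebra_simps)
qed



definition arcs :: "('a \<Rightarrow> 'a \<Rightarrow> bool) \<Rightarrow> 'a set \<Rightarrow> ('a \<times> 'a) set" where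
  "arcs adj V = {(u,v). u \<in> V \<and> v \<in> V \<and> adj u v}"

lemma shearer:
  fixes V :: "'a set" and adj :: "'a \<Rightarrow> 'a \<Rightarrow> bool"
  assumes fin: "finite V" and sym: "\<And>x y. adj x y \<Longrightarrow> adj y x" and irr: "\<And>x. \<not> adj x x"
    and tf: "\<And>x y z. x \<in> V \<Longrightarrow> y \<in> V \<Longrightarrow> z \<in> V \<Longrightarrow> adj x y \<Longrightarrow> adj y z \<Longrightarrow> adj x z \<Longrightarrow> False"
  shows "\<exists>I \<subseteq> V. (\<forall>x\<in>I. \<forall>y\<in>I. \<not> adj x y) \<and>
           real (card V) * psi (real (card (arcs adj V)) / real (card V)) \<le> real (card I)"
  using fin tf
proof (induction "card V" arbitrary: V rule: less_induct)
  case less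
  note fin = less.prems(1)
  note tfV = less.prems(2)
  show ?case
  proof (cases "V = {}")
    case True then show ?thesis by (intro exI[of _ "{}"]) simp
  next
    case Vne: False
    define N where "N = card V"
    have N0: "N > 0" using Vne fin by (simp add: N_def card_gt_0_iff)
    have fa: "finite (arcs adj V)"
      by (rule finite_subset[of _ "V \<times> V"]) (auto simp: arcs_def fin)
    show ?thesis
    proof (cases "arcs adj V = {}")
      case True
      have "\<forall>x\<in>V. \<forall>y\<in>V. \<not> adj x y" using True by (auto simp: arcs_def)
      then show ?thesis using True by (intro exI[of _ V]) (simp add: psi_def)
    next
      case ane: False
      define S where "S = card (arcs adj V)"
      have S0: "S > 0" using ane fa by (simp add: S_def card_gt_0_iff)
      define D where "D = real S / real N"
      have D0: "D > 0" using S0 N0 by (simp add: D_def)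
      have SND: "real S = real N * D" using N0 by (simp add: D_def)
      define nb where "nb x = {u\<in>V. adj x u}" for x
      define dg where "dg x = card (nb x)" for x
      have fnb: "finite (nb x)" for x using fin by (simp add: nb_def)
      define f where "f = psi D"
      define g where "g = gg D"
      have g0: "g \<le> 0" using gg_nonpos[OF D0] by (simp add: g_def)
      have ode: "(D + 1) * f = 1 + (D - D^2) * g" using psi_ode[OF D0] by (simp add: f_def g_def)
      have arcs_eq: "arcs adj V = Sigma V nb" by (auto simp: arcs_def nb_def)
      have S_sum: "real S = (\<Sum>x\<in>V. real (dg x))"
        unfolding S_def arcs_eq dg_def using fin fnb by (simp add: of_nat_sum)
      have sq: "(\<Sum>x\<in>V. \<Sum>y\<in>nb x. real (dg y)) = (\<Sum>y\<in>V. real (dg y) * real (dg y))"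
      proof -
        have "(\<Sum>x\<in>V. \<Sum>y\<in>nb x. real (dg y)) = (\<Sum>x\<in>V. \<Sum>y\<in>{y. y \<in> V \<and> adj x y}. real (dg y))"
          by (simp add: nb_def)
        also have "\<dots> = (\<Sum>y\<in>V. \<Sum>x\<in>{x. x \<in> V \<and> adj x y}. real (dg y))"
          by (rule sum.swap_restrict[OF fin fin])
        also have "\<dots> = (\<Sum>y\<in>V. real (dg y) * real (dg y))"
        proof (rule sum.cong[OF refl])
          fix y assume "y \<in> V"
          have "{x. x \<in> V \<and> adj x y} = nb y" using sym by (auto simp: nb_def)
          then show "(\<Sum>x\<in>{x. x \<in> V \<and> adj x y}. real (dg y)) = real (dg y) * real (dg y)"
            by (simp add: dg_def)
        qed
        finally show ?thesis .
      qed
      have CS: "real N * D^2 \<le> (\<Sum>y\<in>V. real (dg y) * real (dg y))"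
      proof -
        have "0 \<le> (\<Sum>y\<in>V. (real (dg y) - D)^2)" by (intro sum_nonneg) simp
        also have "\<dots> = (\<Sum>y\<in>V. real (dg y) * real (dg y)) - 2 * D * (\<Sum>y\<in>V. real (dg y)) + real N * D^2"
          by (simp add: power2_eq_square algebra_simps sum.distrib sum_subtractf sum_distrib_left N_def)
        also have "\<dots> = (\<Sum>y\<in>V. real (dg y) * real (dg y)) - real N * D^2"
        proof -
          have "(\<Sum>y\<in>V. real (dg y)) = real N * D" using S_sum SND by simp
          then show ?thesis by (simp add: power2_eq_square)
        qed
        finally show ?thesis by simp
      qed
      define T where "T x = 1 - (real (dg x) + 1) * f + g * ((real (dg x) + 1) * D - 2 * (\<Sum>y\<in>nb x. real (dg y)))" for x
      have sumT_eq: "(\<Sum>x\<in>V. T x) = real N - (real S + real N) * f + g * ((real S + real N) * D - 2 * (\<Sum>y\<in>V. real (dg y) * real (dg y)))"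
      proof -
        have Texp: "T x = 1 + (g*D - f) * (real (dg x) + 1) - (2*g) * (\<Sum>y\<in>nb x. real (dg y))" for x
          by (simp add: T_def algebra_simps)
        define Q where "Q = (\<Sum>y\<in>V. real (dg y) * real (dg y))"
        have "(\<Sum>x\<in>V. T x) = (\<Sum>x\<in>V. 1) + (g*D - f) * (\<Sum>x\<in>V. real (dg x) + 1) - (2*g) * (\<Sum>x\<in>V. \<Sum>y\<in>nb x. real (dg y))"
          by (simp only: Texp sum_subtractf sum.distrib sum_distrib_left[symmetric])
        also have "(\<Sum>x\<in>V. real (dg x) + 1) = real S + real N"
          by (simp add: sum.distrib S_sum N_def)
        also have "(\<Sum>x\<in>V. (1::real)) = real N" by (simp add: N_def)
        also have "(\<Sum>x\<in>V. \<Sum>y\<in>nb x. real (dg y)) = Q" unfolding sq Q_def ..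
        finally have "(\<Sum>x\<in>V. T x) = real N + (g*D - f) * (real S + real N) - (2*g) * Q" .
        then show ?thesis unfolding Q_def[symmetric] by (simp add: algebra_simps)
      qed
      have sumT: "(\<Sum>x\<in>V. T x) \<ge> 0"
      proof -
        define Q where "Q = (\<Sum>y\<in>V. real (dg y) * real (dg y))"
        have "(\<Sum>x\<in>V. T x) = real N - real N * ((D + 1) * f) + g * (real N * D^2 + real N * D - 2 * Q)"
          unfolding sumT_eq Q_def[symmetric] SND by (simp add: algebra_simps power2_eq_square)
        also have "\<dots> = 2 * g * (real N * D^2 - Q)"
          unfolding ode by (simp add: algebra_simps power2_eq_square)
        also have "\<dots> \<ge> 0" using g0 CS by (simp add: Q_def mult_nonpos_nonpos)
        finally show ?thesis .
      qed
      obtain x where xV: "x \<in> V" and Tx: "T x \<ge> 0"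
      proof (rule ccontr)
        assume "\<not> thesis"
        then have "\<forall>x\<in>V. T x < 0" using that by force
        then have "(\<Sum>x\<in>V. T x) < (\<Sum>x\<in>V. 0)" using Vne fin by (intro sum_strict_mono) auto
        then show False using sumT by simp
      qed
      define V' where "V' = V - insert x (nb x)"
      have V'sub: "V' \<subseteq> V" by (auto simp: V'_def)
      have fV': "finite V'" using fin by (simp add: V'_def)
      have "V' \<subset> V" using xV V'sub by (auto simp: V'_def)
      then have cV': "card V' < card V" by (rule psubset_card_mono[OF fin])
      have tfV': "\<And>a b c. a \<in> V' \<Longrightarrow> b \<in> V' \<Longrightarrow> c \<in> V' \<Longrightarrow> adj a b \<Longrightarrow> adj b c \<Longrightarrow> adj a c \<Longrightarrow> False"
        using tfV V'sub by blast
      have ex: "\<exists>I \<subseteq> V'. (\<forall>x\<in>I. \<forall>y\<in>I. \<not> adj x y) \<and>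
           real (card V') * psi (real (card (arcs adj V')) / real (card V')) \<le> real (card I)"
        by (rule less.hyps[OF cV' fV' tfV'])
      then obtain I' where hI': "I' \<subseteq> V' \<and> (\<forall>u\<in>I'. \<forall>v\<in>I'. \<not> adj u v) \<and>
           real (card V') * psi (real (card (arcs adj V')) / real (card V')) \<le> real (card I')"
        by (rule exE)
      have I'sub: "I' \<subseteq> V'" using hI' by (rule conjunct1)
      have I'ind: "\<forall>u\<in>I'. \<forall>v\<in>I'. \<not> adj u v" using hI' by (rule conjunct1[OF conjunct2])
      have I'card: "real (card V') * psi (real (card (arcs adj V')) / real (card V')) \<le> real (card I')"
        using hI' by (rule conjunct2[OF conjunct2])
      define I where "I = insert x I'"
      have xI': "x \<notin> I'" using I'sub by (auto simp: V'_def)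
      have fI': "finite I'" using I'sub fV' finite_subset by blast
      have cardI: "card I = card I' + 1" using xI' fI' by (simp add: I_def)
      have Isub: "I \<subseteq> V" using I'sub V'sub xV by (auto simp: I_def)
      have Iind: "\<forall>u\<in>I. \<forall>v\<in>I. \<not> adj u v"
      proof (intro ballI)
        fix u v assume u: "u \<in> I" and v: "v \<in> I"
        have nx: "\<And>w. w \<in> I' \<Longrightarrow> \<not> adj x w" using I'sub V'sub by (auto simp: V'_def nb_def)
        show "\<not> adj u v"
        proof (cases "u = x")
          case True
          then show ?thesis
          proof (cases "v = x")
            case True then show ?thesis using \<open>u = x\<close> irr by simp
          next
            case False then have "v \<in> I'" using v by (simp add: I_def)
            then show ?thesis using nx \<open>u = x\<close> by simp
          qed
        next
          case False then have uI: "u \<in> I'" using u by (simp add: I_def)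
          show ?thesis
          proof (cases "v = x")
            case True then show ?thesis using nx[OF uI] sym by blast
          next
            case False then have "v \<in> I'" using v by (simp add: I_def)
            then show ?thesis using I'ind uI by simp
          qed
        qed
      qed
      have xnb: "x \<notin> nb x" using irr by (simp add: nb_def)
      have nbV: "nb x \<subseteq> V" by (auto simp: nb_def)
      have cardV': "real (card V') = real N - 1 - real (dg x)"
      proof -
        have "card (insert x (nb x)) = dg x + 1" using xnb fnb by (simp add: dg_def)
        moreover have "insert x (nb x) \<subseteq> V" using xV nbV by auto
        ultimately have "card V' = N - (dg x + 1)" unfolding V'_def N_def
          using card_Diff_subset fin finite_subset by metis
        moreover have "dg x + 1 \<le> N" unfolding N_def
          using \<open>insert x (nb x) \<subseteq> V\<close> \<open>card (insert x (nb x)) = dg x + 1\<close> card_mono fin by metis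
        ultimately show ?thesis by simp
      qed
      define Sx where "Sx = (\<Sum>y\<in>nb x. real (dg y))"
      have arcbound: "real (card (arcs adj V')) + 2 * Sx \<le> real S"
      proof -
        define A1 where "A1 = Sigma (nb x) nb"
        define A2 where "A2 = (\<lambda>(a,b). (b,a)) ` A1"
        have fA1: "finite A1" using fnb by (simp add: A1_def)
        have cA1: "real (card A1) = Sx" unfolding A1_def Sx_def dg_def using fnb by (simp add: of_nat_sum)
        have "inj_on (\<lambda>(a,b). (b,a)) A1" by (auto simp: inj_on_def)
        then have cA2: "card A2 = card A1" by (simp add: A2_def card_image)
        have fA2: "finite A2" using fA1 by (simp add: A2_def)
        have fa': "finite (arcs adj V')" by (rule finite_subset[of _ "V \<times> V"]) (use V'sub fin in \<open>auto simp: arcs_def\<close>)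
        have d1: "arcs adj V' \<inter> A1 = {}" by (auto simp: arcs_def A1_def V'_def)
        have d2: "arcs adj V' \<inter> A2 = {}" by (auto simp: arcs_def A2_def A1_def V'_def)
        have d3: "A1 \<inter> A2 = {}"
        proof (rule ccontr)
          assume "A1 \<inter> A2 \<noteq> {}"
          then obtain u v where "u \<in> nb x" "v \<in> nb u" "v \<in> nb x" by (auto simp: A1_def A2_def)
          then show False using tfV[of x u v] xV by (auto simp: nb_def)
        qed
        have sub: "arcs adj V' \<union> A1 \<union> A2 \<subseteq> arcs adj V"
          using V'sub sym by (auto simp: arcs_def A1_def A2_def nb_def)
        have "card (arcs adj V' \<union> A1 \<union> A2) = card (arcs adj V') + card A1 + card A2"
          using d1 d2 d3 fA1 fA2 fa' by (simp add: card_Un_disjoint Int_Un_distrib2)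
        moreover have "card (arcs adj V' \<union> A1 \<union> A2) \<le> S" using card_mono[OF fa sub] by (simp add: S_def)
        ultimately show ?thesis using cA1 cA2 by linarith
      qed
      define N' where "N' = real (card V')"
      define S' where "S' = real (card (arcs adj V'))"
      have claim1: "N' * psi (S' / N') \<ge> N' * f + g * (S' - N' * D)"
      proof (cases "card V' = 0")
        case True
        then have "V' = {}" using fV' by simp
        then have "S' = 0" by (simp add: S'_def arcs_def)
        then show ?thesis using True by (simp add: N'_def)
      next
        case False
        then have Np: "N' > 0" by (simp add: N'_def)
        have "f + (S' / N' - D) * g \<le> psi (S' / N')" unfolding f_def g_def
          by (rule psi_tangent[OF D0]) (simp add: S'_def N'_def)
        then have "N' * (f + (S' / N' - D) * g) \<le> N' * psi (S' / N')"
          using Np by (simp add: mult_left_mono)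
        moreover have "N' * (f + (S' / N' - D) * g) = N' * f + g * (S' - N' * D)"
          using Np by (simp add: algebra_simps)
        ultimately show ?thesis by simp
      qed
      have claim2: "g * (S' - N' * D) \<ge> g * (real S - 2 * Sx - N' * D)"
        using arcbound g0 by (intro mult_left_mono_neg) (simp_all add: S'_def)
      have eqT: "1 + N' * f + g * (real S - 2 * Sx - N' * D) = real N * f + T x"
        unfolding T_def Sx_def[symmetric] N'_def cardV' SND by (simp add: algebra_simps)
      have "real N * f \<le> real (card I)"
        using claim1 claim2 eqT Tx I'card cardI by (simp add: N'_def S'_def)
      then show ?thesis using Isub Iind by (auto simp: N_def S_def D_def f_def)
    qed
  qed
qed



lemma graph_on_mem:
  assumes "graph_on n G" "{u, v} \<in> G"
  shows "u \<noteq> v \<and> u \<in> {1..n} \<and> v \<in> {1..n}"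
proof -
  obtain a b where "{u, v} = {a, b}" "a \<noteq> b" "a \<in> {1..n}" "b \<in> {1..n}"
    using assms unfolding graph_on_def by blast
  then show ?thesis by (auto simp: doubleton_eq_iff)
qed

lemma graph_on_sub: "graph_on n G \<Longrightarrow> G \<subseteq> Pow {1..n}"
  unfolding graph_on_def by auto

lemma graph_on_finite: "graph_on n G \<Longrightarrow> finite G"
  using graph_on_sub finite_subset by (metis finite_Pow_iff finite_atLeastAtMost)

lemma minmax_pair:
  fixes u v :: nat
  assumes "u \<noteq> v"
  shows "Min {u, v} < Max {u, v} \<and> {Min {u, v}, Max {u, v}} = {u, v}"
  using assms by (cases "u < v") (auto simp: min_def max_def)

lemma graph_on_edge: "graph_on n G \<Longrightarrow> e \<in> G \<Longrightarrow> \<exists>u v. e = {u, v} \<and> u \<noteq> v"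
  unfolding graph_on_def by blast

lemma two_card_le:
  assumes "graph_on n G"
  shows "2 * card G \<le> card {(u, v). {u, v} \<in> G}"
proof -
  define OP where "OP = {(u, v). {u, v} \<in> G}"
  have fOP: "finite OP"
    by (rule finite_subset[of _ "{1..n} \<times> {1..n}"]) (use graph_on_mem[OF assms] in \<open>auto simp: OP_def\<close>)
  define f1 where "f1 e = (Min e, Max e)" for e :: "nat set"
  define f2 where "f2 e = (Max e, Min e)" for e :: "nat set"
  have key: "\<And>e. e \<in> G \<Longrightarrow> Min e < Max e \<and> {Min e, Max e} = e"
    using graph_on_edge[OF assms] minmax_pair by metis
  have i1: "inj_on f1 G" unfolding inj_on_def f1_def using key by (metis prod.inject)
  have i2: "inj_on f2 G" unfolding inj_on_def f2_def using key by (metis prod.inject)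
  have dj: "f1 ` G \<inter> f2 ` G = {}"
  proof (rule ccontr)
    assume "f1 ` G \<inter> f2 ` G \<noteq> {}"
    then obtain p where "p \<in> f1 ` G" "p \<in> f2 ` G" by blast
    then obtain e e' where "e \<in> G" "e' \<in> G" "f1 e = f2 e'" by (metis imageE)
    then show False using key[of e] key[of e'] by (auto simp: f1_def f2_def)
  qed
  have sub: "f1 ` G \<union> f2 ` G \<subseteq> OP"
  proof
    fix p assume "p \<in> f1 ` G \<union> f2 ` G"
    then obtain e where e: "e \<in> G" "p = f1 e \<or> p = f2 e" by auto
    then have "{Min e, Max e} \<in> G" "{Max e, Min e} \<in> G" using key[OF e(1)] by (auto simp: insert_commute)
    then show "p \<in> OP" using e(2) by (auto simp: OP_def f1_def f2_def)
  qed
  have fG: "finite G" using graph_on_finite[OF assms] .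
  have "card (f1 ` G \<union> f2 ` G) = card G + card G"
    using dj i1 i2 fG by (simp add: card_Un_disjoint card_image)
  moreover have "card (f1 ` G \<union> f2 ` G) \<le> card OP" using card_mono[OF fOP sub] .
  ultimately show ?thesis by (simp add: OP_def)
qed

lemma card_OP_le:
  assumes "graph_on n G"
  shows "card {(u, v). {u, v} \<in> G} \<le> 2 * card G"
proof -
  define OP where "OP = {(u, v). {u, v} \<in> G}"
  define f1 where "f1 e = (Min e, Max e)" for e :: "nat set"
  define f2 where "f2 e = (Max e, Min e)" for e :: "nat set"
  have fG: "finite G" using graph_on_finite[OF assms] .
  have "OP \<subseteq> f1 ` G \<union> f2 ` G"
  proof
    fix p assume "p \<in> OP"
    then obtain u v where p: "p = (u, v)" "{u, v} \<in> G" by (auto simp: OP_def)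
    then have uv: "u \<noteq> v" using graph_on_mem[OF assms] by blast
    show "p \<in> f1 ` G \<union> f2 ` G"
    proof (cases "u < v")
      case True
      then have "f1 {u, v} = p" by (simp add: f1_def p min_def max_def)
      then show ?thesis using p by blast
    next
      case False
      then have "f2 {u, v} = p" using uv by (simp add: f2_def p min_def max_def)
      then show ?thesis using p by blast
    qed
  qed
  then have "card OP \<le> card (f1 ` G \<union> f2 ` G)" using fG by (intro card_mono) auto
  also have "\<dots> \<le> card (f1 ` G) + card (f2 ` G)" by (rule card_Un_le)
  also have "\<dots> \<le> card G + card G" by (intro add_mono card_image_le fG)
  finally show ?thesis by (simp add: OP_def)
qed

lemma part1:
  assumes n: "n \<ge> 1" and gP: "graph_on n P" and tfP: "triangle_free P"
  shows "real (ex_P_K3 n P) \<le> real n * real (indep_num n P) / 2"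
proof -
  define Gs where "Gs = {num_edges G | G. graph_on n G \<and> triangle_free G \<and> P \<subseteq> G}"
  define Is where "Is = {card S | S. independent_set n P S}"
  have fIs: "finite Is"
    by (rule finite_subset[of _ "card ` Pow {1..n}"]) (auto simp: Is_def independent_set_def)
  have fGs: "finite Gs"
    by (rule finite_subset[of _ "card ` Pow (Pow {1..n})"]) (auto simp: Gs_def num_edges_def dest: graph_on_sub)
  have "P \<noteq> {} \<or> P = {}" by simp
  have Gsne: "Gs \<noteq> {}" using gP tfP by (auto simp: Gs_def)
  have bound: "2 * card G \<le> n * indep_num n P" if G: "graph_on n G" "triangle_free G" "P \<subseteq> G" for G
  proof -
    define nbG where "nbG v = {u. {u, v} \<in> G}" for v
    have "card {(u, v). {u, v} \<in> G} = card (Sigma {1..n} nbG)"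
    proof -
      have "(\<lambda>(u, v). (v, u)) ` {(u, v). {u, v} \<in> G} = Sigma {1..n} nbG"
      proof -
        have memv: "\<And>u v. {u,v} \<in> G \<Longrightarrow> u \<in> {1..n} \<and> v \<in> {1..n}" using graph_on_mem[OF G(1)] by blast
        show ?thesis by (auto simp: nbG_def image_iff insert_commute dest: memv)
      qed
      moreover have "inj_on (\<lambda>(u, v). (v, u)) {(u, v). {u, v} \<in> G}" by (auto simp: inj_on_def)
      ultimately show ?thesis by (metis card_image)
    qed
    also have "\<dots> = (\<Sum>v\<in>{1..n}. card (nbG v))"
      by (rule card_SigmaI) (auto intro: finite_subset[of _ "{1..n}"] simp: nbG_def dest: graph_on_mem[OF G(1)])
    also have "\<dots> \<le> (\<Sum>v\<in>{1..n}. indep_num n P)"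
    proof (rule sum_mono)
      fix v assume "v \<in> {1..n}"
      have "independent_set n P (nbG v)"
        unfolding independent_set_def
      proof (intro conjI ballI)
        show "nbG v \<subseteq> {1..n}" using graph_on_mem[OF G(1)] by (auto simp: nbG_def)
        fix a b assume a: "a \<in> nbG v" and b: "b \<in> nbG v"
        show "{a, b} \<notin> P"
        proof
          assume ab: "{a, b} \<in> P"
          then have "{a, b} \<in> G" using G(3) by auto
          moreover have "{b, v} \<in> G" "{a, v} \<in> G" using a b by (auto simp: nbG_def)
          ultimately show False using G(2) unfolding triangle_free_def by blast
        qed
      qed
      then have "card (nbG v) \<in> Is" by (auto simp: Is_def)
      then show "card (nbG v) \<le> indep_num n P" unfolding indep_num_def Is_def[symmetric]
        using fIs by (rule Max_ge[rotated])
    qed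
    also have "\<dots> = n * indep_num n P" by simp
    finally show ?thesis using two_card_le[OF G(1)] by linarith
  qed
  have "ex_P_K3 n P \<in> Gs" unfolding ex_P_K3_def Gs_def[symmetric] using fGs Gsne by (rule Max_in)
  then obtain G where G: "graph_on n G" "triangle_free G" "P \<subseteq> G" "ex_P_K3 n P = card G"
    by (auto simp: Gs_def num_edges_def)
  have "2 * ex_P_K3 n P \<le> n * indep_num n P" using bound[OF G(1-3)] G(4) by simp
  then have "real (2 * ex_P_K3 n P) \<le> real (n * indep_num n P)" by (simp only: of_nat_le_iff)
  then show ?thesis by simp
qed



lemma ndiv4: "(n div 2) * (n - n div 2) = n^2 div (4::nat)"
proof (cases "even n")
  case True
  then obtain k where "n = 2 * k" by blast
  then show ?thesis by (simp add: power2_eq_square)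
next
  case False
  then obtain k where k: "n = 2 * k + 1" using oddE by blast
  have "n^2 = 4 * (k * k + k) + 1" by (simp add: k power2_eq_square algebra_simps)
  then have "n^2 div 4 = k * k + k" by simp
  moreover have "n div 2 = k" using k by simp
  moreover have "n - n div 2 = k + 1" using k by simp
  ultimately show ?thesis by (simp add: algebra_simps)
qed

lemma part2:
  assumes n: "n \<ge> 1" and gP: "graph_on n P" and tfP: "triangle_free P"
    and hyp: "num_edges P + num_S2 n P < n^2 div 4"
  shows "real (ex_P_K3 n P) \<ge>
           (real (n^2 div 4) - real (num_edges P) - real (num_S2 n P))
             * psi (gamma_P n P * avg_degree n P)"
proof -
  have mem: "\<And>u v. {u, v} \<in> P \<Longrightarrow> u \<noteq> v \<and> u \<in> {1..n} \<and> v \<in> {1..n}"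
    using graph_on_mem[OF gP] by blast
  have noloop: "\<And>u. {u, u} \<notin> P" using mem by blast
  have noloop1: "\<And>u. {u} \<notin> P" using noloop by simp
  have tfP': "\<And>a b c. {a, b} \<in> P \<Longrightarrow> {b, c} \<in> P \<Longrightarrow> {a, c} \<in> P \<Longrightarrow> False"
    using tfP unfolding triangle_free_def by blast
  have fP: "finite P" using graph_on_finite[OF gP] .
  define m where "m = n div 2"
  have mn: "m \<le> n" by (simp add: m_def)
  define C where "C = {(a, b). a \<in> {1..m} \<and> b \<in> {m+1..n} \<and> {a, b} \<notin> P \<and> \<not> (\<exists>w. {a, w} \<in> P \<and> {w, b} \<in> P)}"
  define adjH where "adjH p q = ((fst p = fst q \<and> {snd p, snd q} \<in> P) \<or> (snd p = snd q \<and> {fst p, fst q} \<in> P))"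
    for p q :: "nat \<times> nat"
  have fC: "finite C"
    by (rule finite_subset[of _ "{1..m} \<times> {m+1..n}"]) (auto simp: C_def)
  have symH: "\<And>p q. adjH p q \<Longrightarrow> adjH q p" by (auto simp: adjH_def insert_commute)
  have irrH: "\<And>p. \<not> adjH p p" by (auto simp: adjH_def noloop1)
  have tfH: "\<And>p q r. p \<in> C \<Longrightarrow> q \<in> C \<Longrightarrow> r \<in> C \<Longrightarrow> adjH p q \<Longrightarrow> adjH q r \<Longrightarrow> adjH p r \<Longrightarrow> False"
  proof -
    fix p q r assume "adjH p q" "adjH q r" "adjH p r"
    then show False
      unfolding adjH_def using noloop1 tfP'[of "snd p" "snd q" "snd r"] tfP'[of "fst p" "fst q" "fst r"]
      by (auto simp: insert_commute)
  qed
  have "\<exists>I \<subseteq> C. (\<forall>x\<in>I. \<forall>y\<in>I. \<not> adjH x y) \<and>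
           real (card C) * psi (real (card (arcs adjH C)) / real (card C)) \<le> real (card I)"
    by (rule shearer[of C adjH, OF fC symH irrH tfH])
  then obtain I where hI: "I \<subseteq> C \<and> (\<forall>x\<in>I. \<forall>y\<in>I. \<not> adjH x y) \<and>
           real (card C) * psi (real (card (arcs adjH C)) / real (card C)) \<le> real (card I)"
    by (rule exE)
  have Isub: "I \<subseteq> C" using hI by (rule conjunct1)
  have Iind: "\<forall>x\<in>I. \<forall>y\<in>I. \<not> adjH x y" using hI by (rule conjunct1[OF conjunct2])
  have Icard: "real (card C) * psi (real (card (arcs adjH C)) / real (card C)) \<le> real (card I)"
    using hI by (rule conjunct2[OF conjunct2])
  define F where "F = (\<lambda>(a, b). {a, b}) ` I"
  define G where "G = P \<union> F"
  have Fchar: "\<And>e. e \<in> F \<Longrightarrow> \<exists>a b. (a, b) \<in> C \<and> (a, b) \<in> I \<and> e = {a, b} \<and> 1 \<le> a \<and> a \<le> m \<and> m < b \<and> b \<le> n"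
  proof -
    fix e assume "e \<in> F"
    then obtain a b where ab: "(a, b) \<in> I" "e = {a, b}" by (auto simp: F_def)
    then have "(a, b) \<in> C" using Isub by auto
    then show "\<exists>a b. (a, b) \<in> C \<and> (a, b) \<in> I \<and> e = {a, b} \<and> 1 \<le> a \<and> a \<le> m \<and> m < b \<and> b \<le> n"
      using ab by (intro exI[of _ a] exI[of _ b]) (auto simp: C_def)
  qed
  have Fside: "\<And>u v. {u, v} \<in> F \<Longrightarrow> (u \<le> m) \<noteq> (v \<le> m)"
  proof -
    fix u v assume "{u, v} \<in> F"
    then obtain a b where "{u, v} = {a, b}" "a \<le> m" "m < b" using Fchar by blast
    then show "(u \<le> m) \<noteq> (v \<le> m)" by (auto simp: doubleton_eq_iff)
  qed
  have F1: "\<And>x y z. {x, y} \<in> F \<Longrightarrow> {x, z} \<in> P \<Longrightarrow> {y, z} \<in> P \<Longrightarrow> False"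
  proof -
    fix x y z assume xy: "{x, y} \<in> F" and xz: "{x, z} \<in> P" and yz: "{y, z} \<in> P"
    then obtain a b where ab: "(a, b) \<in> C" "{x, y} = {a, b}" using Fchar by blast
    then have nw: "\<not> (\<exists>w. {a, w} \<in> P \<and> {w, b} \<in> P)" by (simp add: C_def)
    from ab(2) have "(x = a \<and> y = b) \<or> (x = b \<and> y = a)" by (auto simp: doubleton_eq_iff)
    then show False
    proof
      assume "x = a \<and> y = b"
      then have "{a, z} \<in> P \<and> {z, b} \<in> P" using xz yz by (simp add: insert_commute)
      then show False using nw by blast
    next
      assume "x = b \<and> y = a"
      then have "{a, z} \<in> P \<and> {z, b} \<in> P" using xz yz by (simp add: insert_commute)
      then show False using nw by blast
    qed
  qed
  have F2: "\<And>x y z. {x, y} \<in> F \<Longrightarrow> {y, z} \<in> F \<Longrightarrow> {x, z} \<in> P \<Longrightarrow> False"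
  proof -
    fix x y z assume xy: "{x, y} \<in> F" and yz: "{y, z} \<in> F" and xz: "{x, z} \<in> P"
    obtain a1 b1 where 1: "(a1, b1) \<in> I" "{x, y} = {a1, b1}" "a1 \<le> m" "m < b1" using Fchar[OF xy] by blast
    obtain a2 b2 where 2: "(a2, b2) \<in> I" "{y, z} = {a2, b2}" "a2 \<le> m" "m < b2" using Fchar[OF yz] by blast
    have na: "\<not> adjH (a1, b1) (a2, b2)" using Iind 1(1) 2(1) by blast
    show False
    proof (cases "y \<le> m")
      case True
      then have "y = a1" "x = b1" "y = a2" "z = b2" using 1 2 by (auto simp: doubleton_eq_iff)
      then have "adjH (a1, b1) (a2, b2)" using xz by (simp add: adjH_def)
      then show False using na by simp
    next
      case False
      then have "y = b1" "x = a1" "y = b2" "z = a2" using 1 2 by (auto simp: doubleton_eq_iff)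
      then have "adjH (a1, b1) (a2, b2)" using xz by (simp add: adjH_def)
      then show False using na by simp
    qed
  qed
  have tfG: "triangle_free G"
    unfolding triangle_free_def
  proof
    assume "\<exists>x y z. {x, y} \<in> G \<and> {y, z} \<in> G \<and> {x, z} \<in> G"
    then obtain x y z where e: "{x, y} \<in> G" "{y, z} \<in> G" "{x, z} \<in> G" by blast
    have c1: "{x, y} \<in> P \<or> {x, y} \<in> F" using e by (simp add: G_def)
    have c2: "{y, z} \<in> P \<or> {y, z} \<in> F" using e by (simp add: G_def)
    have c3: "{x, z} \<in> P \<or> {x, z} \<in> F" using e by (simp add: G_def)
    have sy: "{y, x} = {x, y}" "{z, y} = {y, z}" "{z, x} = {x, z}" by (auto simp: insert_commute)
    show False
      using c1 c2 c3 F1[of x y z] F1[of y z x] F1[of x z y] F2[of x y z] F2[of y x z] F2[of x z y]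
        Fside[of x y] Fside[of y z] Fside[of x z] tfP'[of x y z] unfolding sy by blast
  qed
  have gG: "graph_on n G"
    unfolding graph_on_def
  proof
    fix e assume "e \<in> G"
    then show "\<exists>u v. e = {u, v} \<and> u \<noteq> v \<and> u \<in> {1..n} \<and> v \<in> {1..n}"
    proof (cases "e \<in> P")
      case True then show ?thesis using gP by (auto simp: graph_on_def)
    next
      case False then have "e \<in> F" using \<open>e \<in> G\<close> by (simp add: G_def)
      then obtain a b where "e = {a, b}" "1 \<le> a" "a \<le> m" "m < b" "b \<le> n" using Fchar by blast
      then show ?thesis using mn by (intro exI[of _ a] exI[of _ b]) auto
    qed
  qed
  have PG: "P \<subseteq> G" by (simp add: G_def)
  have fG: "finite G" using graph_on_finite[OF gG] .
  have injF: "inj_on (\<lambda>(a, b). {a, b}) I"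
  proof (rule inj_onI)
    fix p q assume p: "p \<in> I" and q: "q \<in> I" and eq: "(\<lambda>(a, b). {a, b}) p = (\<lambda>(a, b). {a, b}) q"
    obtain a b where pa: "p = (a, b)" by fastforce
    obtain a' b' where qa: "q = (a', b')" by fastforce
    have "a \<le> m" "m < b" "a' \<le> m" "m < b'" using p q Isub pa qa by (auto simp: C_def)
    then show "p = q" using eq pa qa by (auto simp: doubleton_eq_iff)
  qed
  have cardIG: "card I \<le> card G"
  proof -
    have "card F = card I" unfolding F_def using injF by (rule card_image)
    moreover have "card F \<le> card G" using fG by (intro card_mono) (auto simp: G_def)
    ultimately show ?thesis by simp
  qed
  have exge: "card G \<le> ex_P_K3 n P"
  proof -
    define Gs where "Gs = {num_edges G | G. graph_on n G \<and> triangle_free G \<and> P \<subseteq> G}"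
    have fGs: "finite Gs"
      by (rule finite_subset[of _ "card ` Pow (Pow {1..n})"]) (auto simp: Gs_def num_edges_def dest: graph_on_sub)
    have "card G \<in> Gs" using gG tfG PG by (auto simp: Gs_def num_edges_def)
    then show ?thesis unfolding ex_P_K3_def Gs_def[symmetric] using fGs by (rule Max_ge[rotated])
  qed
  define R1 where "R1 = {(a, b). a \<in> {1..m} \<and> b \<in> {m+1..n} \<and> {a, b} \<in> P}"
  define R2 where "R2 = {(a, b). a \<in> {1..m} \<and> b \<in> {m+1..n} \<and> (\<exists>w. {a, w} \<in> P \<and> {w, b} \<in> P)}"
  have AB: "{1..m} \<times> {m+1..n} \<subseteq> C \<union> R1 \<union> R2" by (auto simp: C_def R1_def R2_def)
  have cAB: "card ({1..m} \<times> {m+1..n}) = n^2 div 4"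
    using ndiv4[of n] by (simp add: card_cartesian_product m_def)
  have fR1: "finite R1" by (rule finite_subset[of _ "{1..m} \<times> {m+1..n}"]) (auto simp: R1_def)
  have fR2: "finite R2" by (rule finite_subset[of _ "{1..m} \<times> {m+1..n}"]) (auto simp: R2_def)
  have cR1: "card R1 \<le> card P"
  proof (rule card_inj_on_le[of "\<lambda>(a, b). {a, b}"])
    show "inj_on (\<lambda>(a, b). {a, b}) R1"
      by (rule inj_onI) (auto simp: R1_def doubleton_eq_iff)
    show "(\<lambda>(a, b). {a, b}) ` R1 \<subseteq> P" by (auto simp: R1_def)
  qed (rule fP)
  have cR2: "card R2 \<le> num_S2 n P"
  proof -
    define nbP where "nbP w = {u. {u, w} \<in> P}" for w
    have fnb: "finite (nbP w)" for w
      by (rule finite_subset[of _ "{1..n}"]) (auto simp: nbP_def dest: mem)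
    define T2 where "T2 = Sigma {1..n} (\<lambda>w. {S. S \<subseteq> nbP w \<and> card S = 2})"
    have fT2: "finite T2" unfolding T2_def
      by (rule finite_SigmaI) (auto intro: finite_subset[of _ "Pow (nbP _)"] simp: fnb)
    have fin2: "finite {S. S \<subseteq> nbP w \<and> card S = 2}" for w
      by (rule finite_subset[of _ "Pow (nbP w)"]) (auto simp: fnb)
    have "card T2 = (\<Sum>w\<in>{1..n}. card {S. S \<subseteq> nbP w \<and> card S = 2})"
      unfolding T2_def by (rule card_SigmaI) (auto simp: fin2)
    also have "\<dots> = (\<Sum>w\<in>{1..n}. card (nbP w) choose 2)"
      by (rule sum.cong[OF refl]) (simp add: n_subsets fnb)
    also have "\<dots> = num_S2 n P" by (simp add: num_S2_def degree_def nbP_def)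
    finally have cT2: "card T2 = num_S2 n P" .
    define h where "h p = (SOME w. {fst p, w} \<in> P \<and> {w, snd p} \<in> P, {fst p, snd p})" for p :: "nat \<times> nat"
    have "card R2 \<le> card T2"
    proof (rule card_inj_on_le[of h])
      show "inj_on h R2"
        by (rule inj_onI) (auto simp: h_def R2_def doubleton_eq_iff)
      show "h ` R2 \<subseteq> T2"
      proof
        fix q assume "q \<in> h ` R2"
        then obtain a b where ab: "(a, b) \<in> R2" "q = h (a, b)" by auto
        then have ex: "\<exists>w. {a, w} \<in> P \<and> {w, b} \<in> P" by (simp add: R2_def)
        define w where "w = (SOME w. {a, w} \<in> P \<and> {w, b} \<in> P)"
        have w: "{a, w} \<in> P" "{w, b} \<in> P" using someI_ex[OF ex] by (simp_all add: w_def)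
        have "a \<noteq> b" using ab(1) by (auto simp: R2_def)
        moreover have "w \<in> {1..n}" using mem[OF w(1)] by simp
        moreover have "{a, b} \<subseteq> nbP w" using w by (auto simp: nbP_def insert_commute)
        ultimately show "q \<in> T2" using ab(2) by (simp add: h_def T2_def w_def)
      qed
    qed (rule fT2)
    then show ?thesis using cT2 by simp
  qed
  have cardC: "n^2 div 4 \<le> card C + card P + num_S2 n P"
  proof -
    have "n^2 div 4 \<le> card (C \<union> R1 \<union> R2)"
      unfolding cAB[symmetric] using fC fR1 fR2 AB by (intro card_mono) auto
    also have "\<dots> \<le> card C + card R1 + card R2"
      by (meson add_le_mono card_Un_le le_trans order_refl)
    finally show ?thesis using cR1 cR2 by linarith
  qed
  define OP where "OP = {(u, v). {u, v} \<in> P}"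
  have fOP: "finite OP"
    by (rule finite_subset[of _ "{1..n} \<times> {1..n}"]) (auto simp: OP_def dest: mem)
  have cOP: "card OP \<le> 2 * card P" using card_OP_le[OF gP] by (simp add: OP_def)
  define T where "T = Sigma OP (\<lambda>(u, v). {1..n} - {u, v})"
  have fT: "finite T" unfolding T_def using fOP by auto
  have cT: "card T = card OP * (n - 2)"
  proof -
    have "card T = (\<Sum>p\<in>OP. card ((\<lambda>(u, v). {1..n} - {u, v}) p))"
      unfolding T_def using fOP by (intro card_SigmaI) auto
    also have "\<dots> = (\<Sum>p\<in>OP. n - 2)"
    proof (rule sum.cong[OF refl])
      fix p assume "p \<in> OP"
      then obtain u v where p: "p = (u, v)" "{u, v} \<in> P" by (auto simp: OP_def)
      then have "u \<noteq> v" "{u, v} \<subseteq> {1..n}" using mem by auto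
      then have "card ({1..n} - {u, v}) = n - 2" by (simp add: card_Diff_subset)
      then show "card ((\<lambda>(u, v). {1..n} - {u, v}) p) = n - 2" by (simp add: p)
    qed
    finally show ?thesis by simp
  qed
  define chi where "chi pq = (if fst (fst pq) = fst (snd pq)
      then ((snd (fst pq), snd (snd pq)), fst (fst pq)) else ((fst (fst pq), fst (snd pq)), snd (fst pq)))"
    for pq :: "(nat \<times> nat) \<times> (nat \<times> nat)"
  have arcs_mem: "\<And>a b a' b'. ((a, b), (a', b')) \<in> arcs adjH C \<Longrightarrow>
      a \<le> m \<and> m < b \<and> a' \<le> m \<and> m < b' \<and> 1 \<le> a \<and> b \<le> n \<and> 1 \<le> a' \<and> b' \<le> n \<and>
      ((a = a' \<and> {b, b'} \<in> P) \<or> (a \<noteq> a' \<and> b = b' \<and> {a, a'} \<in> P))"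
    by (auto simp: arcs_def C_def adjH_def noloop1)
  have cArcs: "card (arcs adjH C) \<le> card T"
  proof (rule card_inj_on_le[of chi])
    show "inj_on chi (arcs adjH C)"
    proof (rule inj_onI)
      fix p q assume p: "p \<in> arcs adjH C" and q: "q \<in> arcs adjH C" and eq: "chi p = chi q"
      obtain a b a' b' where pa: "p = ((a, b), (a', b'))" by (metis prod.exhaust)
      obtain c d c' d' where qa: "q = ((c, d), (c', d'))" by (metis prod.exhaust)
      have hp: "a \<le> m \<and> m < b \<and> a' \<le> m \<and> m < b' \<and> ((a = a' \<and> {b, b'} \<in> P) \<or> (a \<noteq> a' \<and> b = b' \<and> {a, a'} \<in> P))"
        using arcs_mem p pa by blast
      have hq: "c \<le> m \<and> m < d \<and> c' \<le> m \<and> m < d' \<and> ((c = c' \<and> {d, d'} \<in> P) \<or> (c \<noteq> c' \<and> d = d' \<and> {c, c'} \<in> P))"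
        using arcs_mem q qa by blast
      show "p = q" using eq hp hq unfolding pa qa chi_def by (auto split: if_splits)
    qed
    show "chi ` arcs adjH C \<subseteq> T"
    proof
      fix r assume "r \<in> chi ` arcs adjH C"
      then obtain p where p: "p \<in> arcs adjH C" "r = chi p" by auto
      obtain a b a' b' where pa: "p = ((a, b), (a', b'))" by (metis prod.exhaust)
      have hp: "a \<le> m \<and> m < b \<and> a' \<le> m \<and> m < b' \<and> 1 \<le> a \<and> b \<le> n \<and> 1 \<le> a' \<and> b' \<le> n \<and> ((a = a' \<and> {b, b'} \<in> P) \<or> (a \<noteq> a' \<and> b = b' \<and> {a, a'} \<in> P))"
        using arcs_mem p pa by blast
      show "r \<in> T" using hp mn unfolding p(2) pa chi_def T_def OP_def by auto
    qed
  qed (rule fT)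
  have n2: "n \<ge> 2"
  proof (rule ccontr)
    assume "\<not> n \<ge> 2" then have "n = 1" using n by simp
    then show False using hyp by simp
  qed
  define e where "e = real (card P)"
  define NS where "NS = real (num_S2 n P)"
  define M where "M = real (n^2 div 4) - e - NS"
  have M0: "M > 0" using hyp by (simp add: M_def e_def NS_def num_edges_def)
  define cC where "cC = real (card C)"
  have MC: "M \<le> cC" using cardC by (simp add: M_def cC_def e_def NS_def)
  have cC0: "cC > 0" using M0 MC by simp
  define Ar where "Ar = real (card (arcs adjH C))"
  have rn2: "real (n - 2) = real n - 2" using n2 by simp
  have Arb: "Ar \<le> 2 * e * (real n - 2)"
  proof -
    have "card (arcs adjH C) \<le> 2 * card P * (n - 2)"
      using cArcs cT cOP by (metis le_trans mult_le_mono1)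
    then have "Ar \<le> real (2 * card P * (n - 2))" by (simp only: Ar_def of_nat_le_iff)
    then show ?thesis by (simp add: e_def rn2)
  qed
  have e0: "e \<ge> 0" by (simp add: e_def)
  have gd: "gamma_P n P * avg_degree n P = 2 * e * (real n - 2) / M"
  proof -
    have g1: "gamma_P n P = real n * (real n - 2) / M" by (simp add: gamma_P_def M_def e_def NS_def num_edges_def)
    have g2: "avg_degree n P = 2 * e / real n" by (simp add: avg_degree_def e_def num_edges_def)
    have nz: "real n \<noteq> 0" using n by simp
    show ?thesis unfolding g1 g2 using nz M0 by (simp add: field_simps)
  qed
  have gd0: "2 * e * (real n - 2) / M \<ge> 0" using M0 e0 n2 by simp
  have Ar0: "Ar / cC \<ge> 0" using cC0 by (simp add: Ar_def)
  have "Ar / cC \<le> 2 * e * (real n - 2) / cC" using Arb cC0 by (simp add: divide_right_mono)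
  also have "\<dots> \<le> 2 * e * (real n - 2) / M"
    using M0 MC e0 n2 by (intro divide_left_mono) auto
  finally have ratio: "Ar / cC \<le> 2 * e * (real n - 2) / M" .
  have ps: "psi (2 * e * (real n - 2) / M) \<le> psi (Ar / cC)" by (rule psi_antimono[OF Ar0 ratio])
  have ps0: "psi (2 * e * (real n - 2) / M) \<ge> 0" by (rule psi_nonneg[OF gd0])
  have "M * psi (2 * e * (real n - 2) / M) \<le> cC * psi (2 * e * (real n - 2) / M)"
    using MC ps0 by (simp add: mult_right_mono)
  also have "\<dots> \<le> cC * psi (Ar / cC)" using ps cC0 by (simp add: mult_left_mono)
  also have "\<dots> \<le> real (card I)" using Icard by (simp add: cC_def Ar_def)
  also have "\<dots> \<le> real (ex_P_K3 n P)" using cardIG exge by simp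
  finally show ?thesis unfolding gd by (simp add: M_def e_def NS_def num_edges_def)
qed


theorem theorem1p1:
  fixes n :: nat and P :: "nat set set"
  assumes "n \<ge> 1"
    and "graph_on n P"
    and "triangle_free P"
  shows "real (ex_P_K3 n P) \<le> real n * real (indep_num n P) / 2
    \<and> (num_edges P + num_S2 n P < n^2 div 4 \<longrightarrow>
         real (ex_P_K3 n P) \<ge>
           (real (n^2 div 4) - real (num_edges P) - real (num_S2 n P))
             * psi (gamma_P n P * avg_degree n P))"
  using part1[OF assms] part2[OF assms] by blast

end
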